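(* Let $A=\{(x,y)\in\mathbb{R}^2: 0\le x\le m,\ u_A(x)\le y\le v_A(x)\}$ and $B=\{(x,y)\in\mathbb{R}^2: 0\le x\le n,\ u_B(x)\le y\le v_B(x)\}$ be two convex bodies in the plane, where $m,n>0$. Then $$|A+B|=\left(\frac{|A|}{m}+\frac{|B|}{n}\right)(m+n)$$ if and only if there is a pair $A',B'$ of homothetic convex bodies such that $A$ is a vertical stretching of $A'$ and $B$ is a vertical stretching of $B'$.
   Context: A convex body is a compact convex set with nonempty interior; $|X|$ denotes area; $u_A,u_B$ are convex and $v_A,v_B$ concave functions. For a convex body $X=\{(x,y): x\in\pi(X),\ u_X(x)\le y\le v_X(x)\}$ (where $\pi(x,y)=x$), a vertical stretching of $X$ of amount $h\ge0$ is $\{(x,y): x\in\pi(X),\ u_X(x)\le y\le v_X(x)+h\}$. Two convex bodies are homothetic if one is the image of the other under a map $z\mapsto \lambda z+t$ with $\lambda>0$, $t\in\mathbb{R}^2$. *)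

theory Defs
  imports "HOL-Analysis.Analysis"
begin

definition convex_body :: "(real \<times> real) set \<Rightarrow> bool" where
  "convex_body X \<longleftrightarrow> compact X \<and> convex X \<and> interior X \<noteq> {}"

definition area :: "(real \<times> real) set \<Rightarrow> real" where
  "area X = measure lebesgue X"

definition minkowski_sum :: "(real \<times> real) set \<Rightarrow> (real \<times> real) set \<Rightarrow> (real \<times> real) set" where
  "minkowski_sum X Y = {a + b | a b. a \<in> X \<and> b \<in> Y}"

definition lower_fun :: "(real \<times> real) set \<Rightarrow> real \<Rightarrow> real" where
  "lower_fun X x = Inf {y. (x, y) \<in> X}"

definition upper_fun :: "(real \<times> real) set \<Rightarrow> real \<Rightarrow> real" where
  "upper_fun X x = Sup {y. (x, y) \<in> X}"

definition vertical_stretching :: "(real \<times> real) set \<Rightarrow> real \<Rightarrow> (real \<times> real) set" where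
  "vertical_stretching X h =
     {(x, y). x \<in> fst ` X \<and> lower_fun X x \<le> y \<and> y \<le> upper_fun X x + h}"

definition is_vertical_stretching_of :: "(real \<times> real) set \<Rightarrow> (real \<times> real) set \<Rightarrow> bool" where
  "is_vertical_stretching_of Y X \<longleftrightarrow> (\<exists>h\<ge>0. Y = vertical_stretching X h)"

definition homothetic :: "(real \<times> real) set \<Rightarrow> (real \<times> real) set \<Rightarrow> bool" where
  "homothetic X Y \<longleftrightarrow> (\<exists>c>0. \<exists>t. Y = (\<lambda>z. c *\<^sub>R z + t) ` X)"

end

theory Submission
  imports Defs
begin



lemma clamp_cont:
  fixes f :: "real \<Rightarrow> real"
  assumes "a \<le> b" "continuous_on {a..b} f"
  shows "continuous_on UNIV (\<lambda>x. f (max a (min b x)))"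
proof -
  have "continuous_on UNIV (\<lambda>x::real. max a (min b x))" by (intro continuous_intros)
  moreover have "(\<lambda>x::real. max a (min b x)) ` UNIV \<subseteq> {a..b}" using assms by auto
  ultimately show ?thesis using continuous_on_compose2[OF assms(2)] by blast
qed

lemma region_closed:
  fixes f g :: "real \<Rightarrow> real"
  assumes "a \<le> b" "continuous_on {a..b} f" "continuous_on {a..b} g"
  shows "closed {(x,y). a\<le>x \<and> x\<le>b \<and> f x \<le> y \<and> y \<le> g x}"
proof -
  define F where "F = (\<lambda>x. f (max a (min b x)))"
  define G where "G = (\<lambda>x. g (max a (min b x)))"
  have cF: "continuous_on UNIV F" "continuous_on UNIV G"
    using clamp_cont assms unfolding F_def G_def by auto
  have eq: "{(x,y). a\<le>x \<and> x\<le>b \<and> f x \<le> y \<and> y \<le> g x} =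
     {p. a \<le> fst p} \<inter> {p. fst p \<le> b} \<inter> {p. F (fst p) \<le> snd p} \<inter> {p. snd p \<le> G (fst p)}"
    by (auto simp: F_def G_def)
  have c1: "continuous_on UNIV (\<lambda>p::real\<times>real. F (fst p))"
    by (rule continuous_on_compose2[OF cF(1)]) (auto intro!: continuous_intros)
  have c2: "continuous_on UNIV (\<lambda>p::real\<times>real. G (fst p))"
    by (rule continuous_on_compose2[OF cF(2)]) (auto intro!: continuous_intros)
  show ?thesis unfolding eq
    by (intro closed_Int closed_Collect_le continuous_intros c1 c2)
qed

lemma region_measure:
  fixes f g :: "real \<Rightarrow> real"
  assumes ab: "a \<le> b" and cf: "continuous_on {a..b} f" and cg: "continuous_on {a..b} g"
    and le: "\<forall>x\<in>{a..b}. f x \<le> g x"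
  shows "measure lborel {(x,y). a\<le>x \<and> x\<le>b \<and> f x \<le> y \<and> y \<le> g x} = integral {a..b} (\<lambda>x. g x - f x)"
proof -
  define S where "S = {(x,y). a\<le>x \<and> x\<le>b \<and> f x \<le> y \<and> y \<le> g x}"
  have cl: "closed S" unfolding S_def by (rule region_closed[OF ab cf cg])
  have Sb: "S \<in> sets (lborel \<Otimes>\<^sub>M lborel)" by (subst lborel_prod) (simp add: borel_closed cl)
  have sec: "emeasure lborel (Pair x -` S) = indicator {a..b} x * ennreal (g x - f x)" for x
  proof (cases "x \<in> {a..b}")
    case True
    then have "Pair x -` S = {f x .. g x}" by (auto simp: S_def)
    then show ?thesis using True le by simp
  next
    case False
    then have "Pair x -` S = {}" by (auto simp: S_def)
    then show ?thesis using False by simp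
  qed
  have int: "((\<lambda>x. g x - f x) has_integral integral {a..b} (\<lambda>x. g x - f x)) {a..b}"
    by (intro integrable_integral integrable_continuous_interval continuous_intros cf cg)
  have "emeasure lborel S = emeasure (lborel \<Otimes>\<^sub>M lborel) S" by (simp add: lborel_prod)
  also have "\<dots> = (\<integral>\<^sup>+x. emeasure lborel (Pair x -` S) \<partial>lborel)"
    by (rule lborel.emeasure_pair_measure_alt[OF Sb])
  also have "\<dots> = (\<integral>\<^sup>+x. ennreal (indicator {a..b} x * (g x - f x)) \<partial>lborel)"
    by (simp add: sec indicator_mult_ennreal mult.commute)
  also have "\<dots> = ennreal (integral {a..b} (\<lambda>x. g x - f x))"
    by (rule nn_integral_has_integral_lebesgue) (use le int in auto)
  finally have "emeasure lborel S = ennreal (integral {a..b} (\<lambda>x. g x - f x))" .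
  moreover have "integral {a..b} (\<lambda>x. g x - f x) \<ge> 0"
    by (rule integral_nonneg) (use int le in auto)
  ultimately show ?thesis unfolding S_def[symmetric] by (simp add: measure_def)
qed



lemma concD:
  fixes v :: "real \<Rightarrow> real"
  assumes "concave_on {a..b} v" "x \<in> {a..b}" "y \<in> {a..b}" "0 \<le> t" "t \<le> 1"
  shows "v ((1-t)*x + t*y) \<ge> (1-t) * v x + t * v y"
  using concave_onD[OF assms(1) assms(4,5,2,3)] by simp

lemma lsc_part:
  fixes v :: "real \<Rightarrow> real"
  assumes cv: "concave_on {a..b} v" and x0: "x0 \<in> {a..b}" and e: "e > 0"
  shows "\<exists>d>0. \<forall>x\<in>{a..b}. \<bar>x - x0\<bar> < d \<longrightarrow> v x > v x0 - e"
proof -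
  define K where "K = \<bar>v b - v x0\<bar> + \<bar>v a - v x0\<bar> + 1"
  define W where "W = (if x0 < b then b - x0 else 1)"
  define Z where "Z = (if a < x0 then x0 - a else 1)"
  have K: "K > 0" unfolding K_def by simp
  have W: "W > 0" "Z > 0" unfolding W_def Z_def using x0 by auto
  define d where "d = e * min W Z / K"
  have d: "d > 0" unfolding d_def using K W e by simp
  show ?thesis
  proof (intro exI[of _ d] conjI d ballI impI)
    fix x assume x: "x \<in> {a..b}" and dx: "\<bar>x - x0\<bar> < d"
    consider "x = x0" | "x0 < x" | "x < x0" by linarith
    then show "v x > v x0 - e"
    proof cases
      case 1 then show ?thesis using e by simp
    next
      case 2
      then have xb: "x0 < b" using x by auto
      define t where "t = (x - x0) / (b - x0)"
      have t: "0 \<le> t" "t \<le> 1" unfolding t_def using 2 x xb by auto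
      have tt: "t*(b-x0) = x - x0" unfolding t_def using xb by simp
      have xe: "x = (1-t)*x0 + t*b" using tt by (simp add: algebra_simps)
      have "v x \<ge> (1-t)* v x0 + t * v b" unfolding xe by (rule concD[OF cv x0]) (use xb t x0 in auto)
      moreover have "t*(v b - v x0) \<ge> t*(-K)" by (rule mult_left_mono) (use t in \<open>auto simp: K_def\<close>)
      moreover have "(1-t)* v x0 + t * v b = v x0 + t*(v b - v x0)" by (simp add: algebra_simps)
      ultimately have "v x \<ge> v x0 - t * K" by linarith
      moreover have "t * K < e"
      proof -
        have "d \<le> e * W / K" unfolding d_def using K e W
          by (intro divide_right_mono mult_left_mono) auto
        hence "x - x0 < e * (b - x0) / K" using dx 2 xb unfolding W_def by auto
        hence "(x - x0) * K < e * (b - x0)" using K by (simp add: pos_less_divide_eq)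
        hence "(x - x0) * K / (b - x0) < e" using xb by (simp add: pos_divide_less_eq)
        thus ?thesis unfolding t_def by simp
      qed
      ultimately show ?thesis by linarith
    next
      case 3
      then have xa: "a < x0" using x by auto
      define t where "t = (x0 - x) / (x0 - a)"
      have t: "0 \<le> t" "t \<le> 1" unfolding t_def using 3 x xa by auto
      have tt: "t*(x0-a) = x0 - x" unfolding t_def using xa by simp
      have xe: "x = (1-t)*x0 + t*a" using tt by (simp add: algebra_simps)
      have "v x \<ge> (1-t)* v x0 + t * v a" unfolding xe by (rule concD[OF cv x0]) (use xa t x0 in auto)
      moreover have "t*(v a - v x0) \<ge> t*(-K)" by (rule mult_left_mono) (use t in \<open>auto simp: K_def\<close>)
      moreover have "(1-t)* v x0 + t * v a = v x0 + t*(v a - v x0)" by (simp add: algebra_simps)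
      ultimately have "v x \<ge> v x0 - t * K" by linarith
      moreover have "t * K < e"
      proof -
        have "d \<le> e * Z / K" unfolding d_def using K e W
          by (intro divide_right_mono mult_left_mono) auto
        hence "x0 - x < e * (x0 - a) / K" using dx 3 xa unfolding Z_def by auto
        hence "(x0 - x) * K < e * (x0 - a)" using K by (simp add: pos_less_divide_eq)
        hence "(x0 - x) * K / (x0 - a) < e" using xa by (simp add: pos_divide_less_eq)
        thus ?thesis unfolding t_def by simp
      qed
      ultimately show ?thesis by linarith
    qed
  qed
qed

lemma usc_part:
  fixes v :: "real \<Rightarrow> real" and S :: "(real \<times> real) set"
  assumes S: "compact S" and up: "\<forall>x y. (x,y) \<in> S \<longrightarrow> y \<le> v x" and e: "e > 0"
  shows "\<exists>d>0. \<forall>x. (x, v x) \<in> S \<longrightarrow> \<bar>x - x0\<bar> < d \<longrightarrow> v x < v x0 + e"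
proof -
  define K where "K = fst ` (S \<inter> {p. v x0 + e \<le> snd p})"
  have cl: "closed {p::real\<times>real. v x0 + e \<le> snd p}"
    by (rule closed_Collect_le) (auto intro!: continuous_intros)
  have "compact (S \<inter> {p. v x0 + e \<le> snd p})" by (rule compact_Int_closed[OF S cl])
  hence "compact K" unfolding K_def
    by (rule compact_continuous_image[rotated]) (auto intro!: continuous_intros)
  hence cK: "closed K" by (rule compact_imp_closed)
  have "x0 \<notin> K"
  proof
    assume "x0 \<in> K"
    then obtain y where "(x0, y) \<in> S" "v x0 + e \<le> y" unfolding K_def by force
    with up e show False by force
  qed
  moreover have "open (- K)" using cK by (rule open_Compl)
  ultimately obtain d where d: "d > 0" "ball x0 d \<subseteq> - K"
    unfolding open_contains_ball by blast
  show ?thesis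
  proof (intro exI[of _ d] conjI d allI impI)
    fix x assume xs: "(x, v x) \<in> S" and dx: "\<bar>x - x0\<bar> < d"
    have "x \<in> ball x0 d" using dx by (simp add: dist_real_def abs_minus_commute)
    hence "x \<notin> K" using d by auto
    thus "v x < v x0 + e" using xs unfolding K_def by force
  qed
qed

lemma concave_cont:
  fixes v :: "real \<Rightarrow> real" and S :: "(real \<times> real) set"
  assumes S: "compact S" and cv: "concave_on {a..b} v"
    and gr: "\<forall>x\<in>{a..b}. (x, v x) \<in> S" and up: "\<forall>x y. (x,y) \<in> S \<longrightarrow> y \<le> v x"
  shows "continuous_on {a..b} v"
  unfolding continuous_on_iff
proof (intro ballI allI impI)
  fix x0 e :: real assume x0: "x0 \<in> {a..b}" and e: "0 < e"
  obtain d1 where d1: "d1 > 0" "\<forall>x. (x, v x) \<in> S \<longrightarrow> \<bar>x - x0\<bar> < d1 \<longrightarrow> v x < v x0 + e"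
    using usc_part[OF S up e] by blast
  obtain d2 where d2: "d2 > 0" "\<forall>x\<in>{a..b}. \<bar>x - x0\<bar> < d2 \<longrightarrow> v x > v x0 - e"
    using lsc_part[OF cv x0 e] by blast
  show "\<exists>d>0. \<forall>x'\<in>{a..b}. dist x' x0 < d \<longrightarrow> dist (v x') (v x0) < e"
  proof (intro exI[of _ "min d1 d2"] conjI ballI impI)
    show "min d1 d2 > 0" using d1 d2 by simp
    fix x assume x: "x \<in> {a..b}" and dx: "dist x x0 < min d1 d2"
    have "v x < v x0 + e" using d1 gr x dx by (simp add: dist_real_def)
    moreover have "v x > v x0 - e" using d2 x dx by (simp add: dist_real_def)
    ultimately show "dist (v x) (v x0) < e" by (simp add: dist_real_def abs_less_iff)
  qed
qed



lemma step_ineq: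
  fixes P Q :: "real \<Rightarrow> real" and \<mu> \<nu> :: real
  assumes cP: "concave_on {0..1} P" and cQ: "concave_on {0..1} Q"
    and mu: "\<mu> > 0" and nu: "\<nu> > 0" and mn: "\<mu> + \<nu> = 1"
    and cond: "\<forall>a1\<in>{0..1}. \<forall>a2\<in>{0..1}. \<mu> * P a1 + \<nu> * Q a2 \<le> \<mu> * P (\<mu> * a1 + \<nu> * a2) + \<nu> * Q (\<mu> * a1 + \<nu> * a2)"
    and D: "0 < D" "D \<le> s" "s + D \<le> 1"
  shows "P (s + D) - P s \<le> Q s - Q (s - D)"
proof -
  define e where "e = min D (\<nu>/\<mu>*D)"
  define e' where "e' = \<mu>/\<nu>*e"
  have e: "0 < e" "e \<le> D" unfolding e_def using D mu nu by auto
  have e'pos: "0 < e'" unfolding e'_def using e mu nu by simp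
  have "e \<le> \<nu>/\<mu>*D" unfolding e_def by simp
  hence "\<mu> * e \<le> \<nu> * D" using mu by (simp add: field_simps)
  hence e'D: "e' \<le> D" unfolding e'_def using nu by (simp add: field_simps)
  have s01: "s \<in> {0..1}" using D by auto
  have s1: "s + e \<in> {0..1}" using D e by auto
  have s2: "s - e' \<in> {0..1}" using D e'D e'pos by auto
  have ne: "\<nu> * e' = \<mu> * e" unfolding e'_def using nu by simp
  have "\<mu>*(s+e) + \<nu>*(s-e') = (\<mu>+\<nu>)* s + (\<mu>*e - \<nu>*e')" by (simp add: algebra_simps)
  hence comb: "\<mu>*(s+e) + \<nu>*(s-e') = s" using ne mn by simp
  have c1: "\<mu> * P (s+e) + \<nu> * Q (s-e') \<le> \<mu> * P s + \<nu> * Q s"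
    using bspec[OF bspec[OF cond s1] s2] unfolding comb .
  define t where "t = e / D"
  define t' where "t' = e' / D"
  have t: "0 \<le> t" "t \<le> 1" unfolding t_def using e D by auto
  have t': "0 \<le> t'" "t' \<le> 1" unfolding t'_def using e'pos e'D D by auto
  have "P ((1-t)* s + t*(s+D)) \<ge> (1-t) * P s + t * P (s+D)"
    by (rule concD[OF cP s01 _ t]) (use D in auto)
  moreover have "(1-t)* s + t*(s+D) = s + e" unfolding t_def using D by (simp add: field_simps)
  ultimately have p1: "P (s+e) \<ge> (1-t) * P s + t * P (s+D)" by simp
  have "Q ((1-t')* s + t'*(s-D)) \<ge> (1-t') * Q s + t' * Q (s-D)"
    by (rule concD[OF cQ s01 _ t']) (use D in auto)
  moreover have "(1-t')* s + t'*(s-D) = s - e'" unfolding t'_def using D by (simp add: field_simps)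
  ultimately have q1: "Q (s-e') \<ge> (1-t') * Q s + t' * Q (s-D)" by simp
  have eq: "\<mu> * t = \<nu> * t'" unfolding t_def t'_def e'_def using nu by (simp add: field_simps)
  have pos: "\<mu> * t > 0" unfolding t_def using mu e D by simp
  have "t * (P (s+D) - P s) \<le> P (s+e) - P s" using p1 by (simp add: algebra_simps)
  hence "\<mu> * (t * (P (s+D) - P s)) \<le> \<mu> * (P (s+e) - P s)"
    using mu by (intro mult_left_mono) auto
  hence "\<mu> * t * (P (s+D) - P s) \<le> \<mu> * (P (s+e) - P s)" by (simp add: mult.assoc)
  also have "\<dots> \<le> \<nu> * (Q s - Q (s-e'))" using c1 by (simp add: algebra_simps)
  also have "\<dots> \<le> \<nu> * (t' * (Q s - Q (s-D)))"
  proof -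
    have "Q s - Q (s-e') \<le> t' * (Q s - Q (s-D))" using q1 by (simp add: algebra_simps)
    thus ?thesis using nu by (intro mult_left_mono) auto
  qed
  also have "\<dots> = \<nu> * t' * (Q s - Q (s-D))" by (simp add: mult.assoc)
  finally have "\<mu> * t * (P (s+D) - P s) \<le> \<mu> * t * (Q s - Q (s-D))" using eq by simp
  thus ?thesis using pos by (rule mult_left_le_imp_le)
qed


lemma tele:
  fixes P Q :: "real \<Rightarrow> real" and \<mu> \<nu> :: real
  assumes cP: "concave_on {0..1} P" and cQ: "concave_on {0..1} Q"
    and mu: "\<mu> > 0" and nu: "\<nu> > 0" and mn: "\<mu> + \<nu> = 1"
    and cond: "\<forall>a1\<in>{0..1}. \<forall>a2\<in>{0..1}. \<mu> * P a1 + \<nu> * Q a2 \<le> \<mu> * P (\<mu> * a1 + \<nu> * a2) + \<nu> * Q (\<mu> * a1 + \<nu> * a2)"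
    and st: "0 < s" "s < t" "t \<le> 1" and N: "N > 0" and Ns: "(t - s) / real N \<le> s"
  shows "P t - P s \<le> Q (t - (t - s) / real N) - Q (s - (t - s) / real N)"
proof -
  define D where "D = (t - s) / real N"
  have D: "D > 0" unfolding D_def using st N by simp
  have ND: "real N * D = t - s" unfolding D_def using N by simp
  define f where "f i = P (s + real i * D)" for i :: nat
  define g where "g i = Q (s + real i * D - D)" for i :: nat
  have "f (Suc i) - f i \<le> g (Suc i) - g i" if i: "i < N" for i
  proof -
    have "real (Suc i) \<le> real N" using i by simp
    hence "real (Suc i) * D \<le> real N * D" using D by (intro mult_right_mono) auto
    hence le: "s + real i * D + D \<le> 1" using ND st by (simp add: algebra_simps)
    have "0 \<le> real i * D" using D by simp
    hence "D \<le> s + real i * D" using Ns D unfolding D_def[symmetric] by linarith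
    from step_ineq[OF cP cQ mu nu mn cond D this le]
    have "P (s + real i * D + D) - P (s + real i * D) \<le> Q (s + real i * D) - Q (s + real i * D - D)" .
    moreover have "s + real (Suc i) * D = s + real i * D + D" by (simp add: algebra_simps)
    moreover have "s + real (Suc i) * D - D = s + real i * D" by (simp add: algebra_simps)
    ultimately show ?thesis unfolding f_def g_def by (simp only:)
  qed
  hence "(\<Sum>i<N. f (Suc i) - f i) \<le> (\<Sum>i<N. g (Suc i) - g i)" by (intro sum_mono) auto
  hence "f N - f 0 \<le> g N - g 0" by (simp add: sum_lessThan_telescope)
  moreover have "f N = P t" unfolding f_def using ND by simp
  moreover have "f 0 = P s" unfolding f_def by simp
  moreover have "g N = Q (t - D)" unfolding g_def using ND by (simp add: algebra_simps)
  moreover have "g 0 = Q (s - D)" unfolding g_def by simp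
  ultimately show ?thesis unfolding D_def by simp
qed


lemma mono_diff:
  fixes P Q :: "real \<Rightarrow> real" and \<mu> \<nu> :: real
  assumes cP: "concave_on {0..1} P" and cQ: "concave_on {0..1} Q"
    and mu: "\<mu> > 0" and nu: "\<nu> > 0" and mn: "\<mu> + \<nu> = 1"
    and cond: "\<forall>a1\<in>{0..1}. \<forall>a2\<in>{0..1}. \<mu> * P a1 + \<nu> * Q a2 \<le> \<mu> * P (\<mu> * a1 + \<nu> * a2) + \<nu> * Q (\<mu> * a1 + \<nu> * a2)"
    and contQ: "continuous_on {0..1} Q"
    and st: "0 < s" "s \<le> t" "t \<le> 1"
  shows "P t - P s \<le> Q t - Q s"
proof (cases "s = t")
  case True then show ?thesis by simp
next
  case False
  with st have st': "0 < s" "s < t" "t \<le> 1" by auto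
  define N0 where "N0 = nat \<lceil>(t - s) / s\<rceil> + 1"
  have ev: "N0 \<le> N \<Longrightarrow> N > 0 \<and> (t - s) / real N \<le> s" for N
  proof -
    assume "N0 \<le> N"
    hence N: "N > 0" and "real N \<ge> (t - s) / s" unfolding N0_def by linarith+
    hence "(t - s) \<le> real N * s" using st' by (simp add: pos_divide_le_eq)
    thus ?thesis using N by (simp add: pos_divide_le_eq mult.commute)
  qed
  have lim0: "(\<lambda>N. (t - s) / real N) \<longlonglongrightarrow> 0" by (rule lim_const_over_n)
  have l1: "(\<lambda>N. t - (t - s) / real N) \<longlonglongrightarrow> t" using tendsto_diff[OF tendsto_const lim0] by simp
  have l2: "(\<lambda>N. s - (t - s) / real N) \<longlonglongrightarrow> s" using tendsto_diff[OF tendsto_const lim0] by simp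
  have e1: "\<forall>\<^sub>F N in sequentially. t - (t - s) / real N \<in> {0..1}"
    unfolding eventually_sequentially
  proof (intro exI[of _ N0] allI impI)
    fix N assume "N0 \<le> N"
    from ev[OF this] have "N > 0" "(t - s) / real N \<le> s" by auto
    moreover have "(t - s) / real N \<ge> 0" using st' by simp
    ultimately show "t - (t - s) / real N \<in> {0..1}" using st' unfolding atLeastAtMost_iff by linarith
  qed
  have e2: "\<forall>\<^sub>F N in sequentially. s - (t - s) / real N \<in> {0..1}"
    unfolding eventually_sequentially
  proof (intro exI[of _ N0] allI impI)
    fix N assume "N0 \<le> N"
    from ev[OF this] have "N > 0" "(t - s) / real N \<le> s" by auto
    moreover have "(t - s) / real N \<ge> 0" using st' by simp
    ultimately show "s - (t - s) / real N \<in> {0..1}" using st' unfolding atLeastAtMost_iff by linarith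
  qed
  have L: "(\<lambda>N. Q (t - (t - s) / real N) - Q (s - (t - s) / real N)) \<longlonglongrightarrow> Q t - Q s"
    by (intro tendsto_diff continuous_on_tendsto_compose[OF contQ l1 _ e1]
        continuous_on_tendsto_compose[OF contQ l2 _ e2]) (use st' in auto)
  show ?thesis
  proof (rule LIMSEQ_le_const[OF L], intro exI[of _ N0] allI impI)
    fix N assume "N0 \<le> N"
    from ev[OF this] have "N > 0" "(t - s) / real N \<le> s" by auto
    thus "P t - P s \<le> Q (t - (t - s) / real N) - Q (s - (t - s) / real N)"
      by (intro tele[OF cP cQ mu nu mn cond st']) 
  qed
qed


lemma const_diff:
  fixes P Q :: "real \<Rightarrow> real" and \<mu> \<nu> :: real
  assumes cP: "concave_on {0..1} P" and cQ: "concave_on {0..1} Q"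
    and mu: "\<mu> > 0" and nu: "\<nu> > 0" and mn: "\<mu> + \<nu> = 1"
    and cond: "\<forall>a1\<in>{0..1}. \<forall>a2\<in>{0..1}. \<mu> * P a1 + \<nu> * Q a2 \<le> \<mu> * P (\<mu> * a1 + \<nu> * a2) + \<nu> * Q (\<mu> * a1 + \<nu> * a2)"
    and contP: "continuous_on {0..1} P" and contQ: "continuous_on {0..1} Q"
  shows "\<forall>s\<in>{0..1}. Q s - P s = Q 1 - P 1"
proof -
  have mn': "\<nu> + \<mu> = 1" using mn by simp
  have cond': "\<forall>a1\<in>{0..1}. \<forall>a2\<in>{0..1}. \<nu> * Q a1 + \<mu> * P a2 \<le> \<nu> * Q (\<nu> * a1 + \<mu> * a2) + \<mu> * P (\<nu> * a1 + \<mu> * a2)"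
  proof (intro ballI)
    fix a1 a2 :: real assume a1: "a1 \<in> {0..1}" and a2: "a2 \<in> {0..1}"
    have h: "\<mu> * P a2 + \<nu> * Q a1 \<le> \<mu> * P (\<mu> * a2 + \<nu> * a1) + \<nu> * Q (\<mu> * a2 + \<nu> * a1)"
      using bspec[OF bspec[OF cond a2] a1] .
    have e1: "\<mu> * a2 + \<nu> * a1 = \<nu> * a1 + \<mu> * a2" by (rule add.commute)
    show "\<nu> * Q a1 + \<mu> * P a2 \<le> \<nu> * Q (\<nu> * a1 + \<mu> * a2) + \<mu> * P (\<nu> * a1 + \<mu> * a2)"
      using h unfolding e1 by linarith
  qed
  have pos: "Q s - P s = Q 1 - P 1" if s: "0 < s" "s \<le> 1" for s
  proof -
    have "P 1 - P s \<le> Q 1 - Q s" by (rule mono_diff[OF cP cQ mu nu mn cond contQ s(1) s(2)]) simp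
    moreover have "Q 1 - Q s \<le> P 1 - P s" by (rule mono_diff[OF cQ cP nu mu mn' cond' contP s(1) s(2)]) simp
    ultimately show ?thesis by linarith
  qed
  show ?thesis
  proof
    fix s :: real assume s: "s \<in> {0..1}"
    show "Q s - P s = Q 1 - P 1"
    proof (cases "s = 0")
      case False
      hence "0 < s" "s \<le> 1" using s by auto
      thus ?thesis by (rule pos)
    next
      case True
      have cR: "continuous_on {0..1} (\<lambda>x. Q x - P x)" by (intro continuous_on_diff contQ contP)
      have l: "(\<lambda>k. 1 / real (Suc k)) \<longlonglongrightarrow> 0"
        using LIMSEQ_inverse_real_of_nat by (simp add: inverse_eq_divide)
      have "\<forall>k. 1 / real (Suc k) \<in> {0..1}" by (auto simp: divide_le_eq_1)
      hence ev: "\<forall>\<^sub>F k in sequentially. 1 / real (Suc k) \<in> {0..1}" by (rule always_eventually)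
      have L: "(\<lambda>k. Q (1 / real (Suc k)) - P (1 / real (Suc k))) \<longlonglongrightarrow> Q 0 - P 0"
        using continuous_on_tendsto_compose[OF cR l _ ev] by auto
      have "(\<lambda>k. Q (1 / real (Suc k)) - P (1 / real (Suc k))) = (\<lambda>k. Q 1 - P 1)"
      proof
        fix k :: nat
        have "0 < 1 / real (Suc k)" "1 / real (Suc k) \<le> 1" by (auto simp: divide_le_eq_1)
        thus "Q (1 / real (Suc k)) - P (1 / real (Suc k)) = Q 1 - P 1" by (rule pos)
      qed
      with L have "(\<lambda>k. Q 1 - P 1) \<longlonglongrightarrow> Q 0 - P 0" by simp
      hence "Q 1 - P 1 = Q 0 - P 0" by (rule LIMSEQ_unique[OF tendsto_const])
      thus ?thesis using True by simp
    qed
  qed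
qed




lemma region_funs:
  fixes f g :: "real \<Rightarrow> real"
  assumes S: "S = {(x,y). x \<in> I \<and> f x \<le> y \<and> y \<le> g x}" and le: "\<forall>x\<in>I. f x \<le> g x"
  shows "fst ` S = I" and "x \<in> I \<Longrightarrow> lower_fun S x = f x" and "x \<in> I \<Longrightarrow> upper_fun S x = g x"
proof -
  show "fst ` S = I"
  proof
    show "fst ` S \<subseteq> I" unfolding S by auto
    show "I \<subseteq> fst ` S"
    proof
      fix x assume x: "x \<in> I"
      hence "(x, f x) \<in> S" unfolding S using le by auto
      thus "x \<in> fst ` S" by (metis fst_conv image_eqI)
    qed
  qed
next
  assume x: "x \<in> I"
  hence "{y. (x,y) \<in> S} = {f x .. g x}" unfolding S by auto
  thus "lower_fun S x = f x" unfolding lower_fun_def using le x by simp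
next
  assume x: "x \<in> I"
  hence "{y. (x,y) \<in> S} = {f x .. g x}" unfolding S by auto
  thus "upper_fun S x = g x" unfolding upper_fun_def using le x by simp
qed

lemma stretch_region:
  fixes f g :: "real \<Rightarrow> real"
  assumes S: "S = {(x,y). x \<in> I \<and> f x \<le> y \<and> y \<le> g x}" and le: "\<forall>x\<in>I. f x \<le> g x"
  shows "vertical_stretching S h = {(x,y). x \<in> I \<and> f x \<le> y \<and> y \<le> g x + h}"
proof -
  have fs: "fst ` S = I" by (rule region_funs(1)[OF S le])
  have l: "\<And>x. x \<in> I \<Longrightarrow> lower_fun S x = f x" by (rule region_funs(2)[OF S le])
  have u: "\<And>x. x \<in> I \<Longrightarrow> upper_fun S x = g x" by (rule region_funs(3)[OF S le])
  show ?thesis unfolding vertical_stretching_def fs by (auto simp: l u)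
qed

lemma sec_props:
  fixes X :: "(real \<times> real) set"
  assumes X: "compact X" and p: "(x, y0) \<in> X"
  shows "(x, upper_fun X x) \<in> X" "(x, lower_fun X x) \<in> X"
    "\<And>y. (x, y) \<in> X \<Longrightarrow> lower_fun X x \<le> y \<and> y \<le> upper_fun X x"
proof -
  define T where "T = {y. (x, y) \<in> X}"
  have "T = snd ` (X \<inter> {p. fst p = x})" unfolding T_def by force
  moreover have "compact (X \<inter> {p. fst p = x})"
    by (rule compact_Int_closed[OF X]) (auto intro!: closed_Collect_eq continuous_intros)
  ultimately have cT: "compact T" by (auto intro!: compact_continuous_image continuous_intros)
  have ne: "T \<noteq> {}" using p unfolding T_def by auto
  have ba: "bdd_above T" "bdd_below T"
    using compact_imp_bounded[OF cT] by (auto intro: bounded_imp_bdd_above bounded_imp_bdd_below)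
  have cl: "closed T" using cT by (rule compact_imp_closed)
  show "(x, upper_fun X x) \<in> X" using closed_contains_Sup[OF ne ba(1) cl] unfolding upper_fun_def T_def by simp
  show "(x, lower_fun X x) \<in> X" using closed_contains_Inf[OF ne ba(2) cl] unfolding lower_fun_def T_def by simp
  fix y assume "(x, y) \<in> X"
  hence "y \<in> T" unfolding T_def by simp
  thus "lower_fun X x \<le> y \<and> y \<le> upper_fun X x"
    unfolding lower_fun_def upper_fun_def T_def[symmetric] using ba by (auto intro: cInf_lower cSup_upper)
qed

lemma convex_cont:
  fixes u :: "real \<Rightarrow> real" and S :: "(real \<times> real) set"
  assumes S: "compact S" and cv: "convex_on {a..b} u"
    and gr: "\<forall>x\<in>{a..b}. (x, u x) \<in> S" and lo: "\<forall>x y. (x,y) \<in> S \<longrightarrow> u x \<le> y"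
  shows "continuous_on {a..b} u"
proof -
  define S' where "S' = (\<lambda>p. (fst p, - snd p)) ` S"
  have cS': "compact S'" unfolding S'_def
    by (rule compact_continuous_image[OF _ S]) (auto intro!: continuous_intros)
  have cv': "concave_on {a..b} (\<lambda>x. - u x)" using cv by (simp add: convex_on_iff_concave)
  have gr': "\<forall>x\<in>{a..b}. (x, - u x) \<in> S'" unfolding S'_def using gr by force
  have up': "\<forall>x y. (x,y) \<in> S' \<longrightarrow> y \<le> - u x" unfolding S'_def using lo by force
  have "continuous_on {a..b} (\<lambda>x. - (- u x))"
    by (intro continuous_on_minus concave_cont[OF cS' cv' gr' up'])
  thus ?thesis by simp
qed

lemma concave_scale:
  fixes v :: "real \<Rightarrow> real"
  assumes cv: "concave_on {0..m} v" and m: "m > 0"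
  shows "concave_on {0..1} (\<lambda>s. v (m * s) / m)"
  unfolding concave_on_iff
proof (intro conjI ballI allI impI)
  show "convex {0..1::real}" by simp
  fix x y u w :: real assume x: "x \<in> {0..1}" and y: "y \<in> {0..1}" and u: "u \<ge> 0" and w: "w \<ge> 0" and uw: "u + w = 1"
  have mx: "m * x \<in> {0..m}" and my: "m * y \<in> {0..m}" using x y m by (auto simp: mult_le_cancel_left1)
  have w1: "w \<le> 1" using u uw by simp
  have "v ((1-w) * (m * x) + w * (m * y)) \<ge> (1-w) * v (m * x) + w * v (m * y)"
    by (rule concD[OF cv mx my w w1])
  moreover have "(1-w) * (m * x) + w * (m * y) = m * (u *\<^sub>R x + w *\<^sub>R y)"
  proof -
    have "u = 1 - w" using uw by simp
    hence "u *\<^sub>R x + w *\<^sub>R y = (1-w) * x + w * y" by simp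
    moreover have "(1-w) * (m * x) + w * (m * y) = m * ((1-w) * x + w * y)" by (simp add: algebra_simps)
    ultimately show ?thesis by (simp only:)
  qed
  moreover have "1 - w = u" using uw by simp
  ultimately have "v (m * (u *\<^sub>R x + w *\<^sub>R y)) \<ge> u * v (m * x) + w * v (m * y)" by simp
  hence "v (m * (u *\<^sub>R x + w *\<^sub>R y)) / m \<ge> (u * v (m * x) + w * v (m * y)) / m"
    using m by (simp add: divide_right_mono)
  thus "u * (v (m * x) / m) + w * (v (m * y) / m) \<le> v (m * (u *\<^sub>R x + w *\<^sub>R y)) / m"
    by (simp add: add_divide_distrib)
qed

lemma cont_scale:
  fixes v :: "real \<Rightarrow> real"
  assumes cv: "continuous_on {0..m} v" and m: "m > 0"
  shows "continuous_on {0..1} (\<lambda>s. v (m * s) / m)"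
proof -
  have "continuous_on {0..1} (\<lambda>s. v (m * s))"
    by (rule continuous_on_compose2[OF cv]) (use m in \<open>auto intro!: continuous_intros simp: mult_le_cancel_left1\<close>)
  thus ?thesis using m by (intro continuous_intros) auto
qed



lemma homothety_body:
  fixes X :: "(real \<times> real) set"
  assumes X: "convex_body X" and c: "c > 0"
  shows "convex_body ((\<lambda>z. c *\<^sub>R z + t) ` X)"
proof -
  have cpt: "compact X" "convex X" "interior X \<noteq> {}" using X unfolding convex_body_def by auto
  have "compact ((\<lambda>z. c *\<^sub>R z + t) ` X)"
    by (rule compact_continuous_image[OF _ cpt(1)]) (auto intro!: continuous_intros)
  moreover have "convex ((\<lambda>z. c *\<^sub>R z + t) ` X)"
  proof -
    have "(\<lambda>z. c *\<^sub>R z + t) ` X = (\<lambda>z. t + c *\<^sub>R z) ` X" by (simp add: add.commute)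
    thus ?thesis using convex_affinity[OF cpt(2)] by simp
  qed
  moreover have "interior ((\<lambda>z. c *\<^sub>R z + t) ` X) \<noteq> {}"
  proof -
    obtain p where "p \<in> interior X" using cpt(3) by auto
    then obtain r where r: "r > 0" "ball p r \<subseteq> X" unfolding mem_interior by auto
    have "ball (c *\<^sub>R p + t) (c * r) \<subseteq> (\<lambda>z. c *\<^sub>R z + t) ` X"
    proof
      fix q assume q: "q \<in> ball (c *\<^sub>R p + t) (c * r)"
      define z where "z = (1/c) *\<^sub>R (q - t)"
      have qz: "q = c *\<^sub>R z + t" unfolding z_def using c by simp
      have "dist p z = (1/c) * dist (c *\<^sub>R p + t) q"
      proof -
        have "c *\<^sub>R p + t - q = c *\<^sub>R (p - z)" unfolding qz by (simp add: algebra_simps)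
        hence "dist (c *\<^sub>R p + t) q = c * dist p z" using c by (simp add: dist_norm)
        thus ?thesis using c by simp
      qed
      also have "\<dots> < (1/c) * (c * r)" using q c by (intro mult_strict_left_mono) (auto simp: dist_commute)
      finally have "z \<in> ball p r" using c by simp
      thus "q \<in> (\<lambda>z. c *\<^sub>R z + t) ` X" using r qz by blast
    qed
    moreover have "c * r > 0" using c r by simp
    ultimately have "c *\<^sub>R p + t \<in> interior ((\<lambda>z. c *\<^sub>R z + t) ` X)" unfolding mem_interior by blast
    thus ?thesis by auto
  qed
  ultimately show ?thesis unfolding convex_body_def by simp
qed

lemma homothetic_sym:
  assumes "homothetic X Y" shows "homothetic Y X"
proof -
  obtain c t where c: "c > 0" and Y: "Y = (\<lambda>z. c *\<^sub>R z + t) ` X" using assms unfolding homothetic_def by auto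
  have "X = (\<lambda>z. (1/c) *\<^sub>R z + (- (1/c) *\<^sub>R t)) ` Y"
    unfolding Y image_image using c by (simp add: algebra_simps)
  thus ?thesis unfolding homothetic_def using c by (intro exI[of _ "1/c"] conjI exI[of _ "- (1/c) *\<^sub>R t"]) auto
qed

lemma construct:
  fixes A B :: "(real \<times> real) set" and m n k1 k2 :: real and uA vA uB vB :: "real \<Rightarrow> real"
  assumes m: "m > 0" and n: "n > 0"
    and leA: "\<forall>x\<in>{0..m}. uA x \<le> vA x"
    and A: "A = {(x, y). 0 \<le> x \<and> x \<le> m \<and> uA x \<le> y \<and> y \<le> vA x}"
    and B: "B = {(x, y). 0 \<le> x \<and> x \<le> n \<and> uB x \<le> y \<and> y \<le> vB x}"
    and bA: "convex_body A"
    and rel: "\<forall>x\<in>{0..m}. vB (n/m * x) = n/m * vA x + k1 \<and> uB (n/m * x) = n/m * uA x + k2"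
    and d: "k2 \<le> k1"
  shows "\<exists>A' B'. convex_body A' \<and> convex_body B' \<and> homothetic A' B' \<and>
            is_vertical_stretching_of A A' \<and> is_vertical_stretching_of B B'"
proof -
  define c where "c = n / m"
  have c: "c > 0" using m n unfolding c_def by simp
  have cm: "c * m = n" unfolding c_def using m by simp
  define B' where "B' = (\<lambda>z. c *\<^sub>R z + (0, k2)) ` A"
  have A': "A = {(x, y). x \<in> {0..m} \<and> uA x \<le> y \<and> y \<le> vA x}" unfolding A by auto
  have relx: "vB x = c * vA (x / c) + k1" "uB x = c * uA (x / c) + k2" if "x \<in> {0..n}" for x
  proof -
    have "x / c \<in> {0..m}" using that c cm by (auto simp: divide_le_eq mult.commute)
    moreover have "c * (x / c) = x" using c by simp
    ultimately show "vB x = c * vA (x / c) + k1" "uB x = c * uA (x / c) + k2" using rel unfolding c_def[symmetric] by metis+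
  qed
  have leB: "\<forall>x\<in>{0..n}. uB x \<le> vB x - (k1 - k2)"
  proof
    fix x assume x: "x \<in> {0..n}"
    have "x / c \<in> {0..m}" using x c cm by (auto simp: divide_le_eq mult.commute)
    hence "uA (x/c) \<le> vA (x/c)" using leA by auto
    hence "c * uA (x/c) \<le> c * vA (x/c)" using c by simp
    thus "uB x \<le> vB x - (k1 - k2)" using relx[OF x] by simp
  qed
  have B'eq: "B' = {(x, y). x \<in> {0..n} \<and> uB x \<le> y \<and> y \<le> vB x - (k1 - k2)}"
  proof (intro set_eqI iffI)
    fix p assume "p \<in> B'"
    then obtain x y where xy: "(x, y) \<in> A" and p: "p = (c * x, c * y + k2)" unfolding B'_def by auto
    have x: "x \<in> {0..m}" "uA x \<le> y" "y \<le> vA x" using xy unfolding A' by auto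
    have cx: "c * x \<in> {0..n}" using x c cm by (auto intro: mult_left_mono)
    have "c * x / c = x" using c by simp
    hence "vB (c * x) = c * vA x + k1" "uB (c * x) = c * uA x + k2" using relx[OF cx] by simp_all
    moreover have "c * uA x \<le> c * y" "c * y \<le> c * vA x" using x c by simp_all
    ultimately show "p \<in> {(x, y). x \<in> {0..n} \<and> uB x \<le> y \<and> y \<le> vB x - (k1 - k2)}"
      using p cx by simp
  next
    fix p assume "p \<in> {(x, y). x \<in> {0..n} \<and> uB x \<le> y \<and> y \<le> vB x - (k1 - k2)}"
    then obtain x y where p: "p = (x, y)" and x: "x \<in> {0..n}" "uB x \<le> y" "y \<le> vB x - (k1 - k2)" by auto
    have xm: "x / c \<in> {0..m}" using x c cm by (auto simp: divide_le_eq mult.commute)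
    have "c * uA (x/c) \<le> y - k2" "y - k2 \<le> c * vA (x/c)" using x relx[OF x(1)] by simp_all
    hence "uA (x/c) \<le> (y - k2) / c" "(y - k2) / c \<le> vA (x/c)" using c
      by (simp_all add: pos_le_divide_eq pos_divide_le_eq mult.commute)
    hence "(x/c, (y-k2)/c) \<in> A" using xm unfolding A' by simp
    moreover have "p = c *\<^sub>R (x/c, (y-k2)/c) + (0, k2)" using p c by simp
    ultimately show "p \<in> B'" unfolding B'_def by blast
  qed
  have B'' : "B = vertical_stretching B' (k1 - k2)"
  proof -
    have "vertical_stretching B' (k1 - k2) = {(x, y). x \<in> {0..n} \<and> uB x \<le> y \<and> y \<le> vB x - (k1 - k2) + (k1 - k2)}"
      by (rule stretch_region[OF B'eq leB])
    thus ?thesis unfolding B by auto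
  qed
  have A'' : "A = vertical_stretching A 0"
  proof -
    have "vertical_stretching A 0 = {(x, y). x \<in> {0..m} \<and> uA x \<le> y \<and> y \<le> vA x + 0}"
      by (rule stretch_region[OF A' leA])
    thus ?thesis unfolding A by auto
  qed
  have "convex_body B'" unfolding B'_def by (rule homothety_body[OF bA c])
  moreover have "homothetic A B'" unfolding homothetic_def B'_def using c by blast
  moreover have "is_vertical_stretching_of A A" unfolding is_vertical_stretching_of_def using A'' by auto
  moreover have "is_vertical_stretching_of B B'" unfolding is_vertical_stretching_of_def using B'' d by (intro exI[of _ "k1 - k2"]) auto
  ultimately show ?thesis using bA by blast
qed



lemma construct_full:
  fixes A B :: "(real \<times> real) set" and m n k1 k2 :: real and uA vA uB vB :: "real \<Rightarrow> real"
  assumes m: "m > 0" and n: "n > 0"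
    and leA: "\<forall>x\<in>{0..m}. uA x \<le> vA x" and leB: "\<forall>x\<in>{0..n}. uB x \<le> vB x"
    and A: "A = {(x, y). 0 \<le> x \<and> x \<le> m \<and> uA x \<le> y \<and> y \<le> vA x}"
    and B: "B = {(x, y). 0 \<le> x \<and> x \<le> n \<and> uB x \<le> y \<and> y \<le> vB x}"
    and bA: "convex_body A" and bB: "convex_body B"
    and rel: "\<forall>x\<in>{0..m}. vB (n/m * x) = n/m * vA x + k1 \<and> uB (n/m * x) = n/m * uA x + k2"
  shows "\<exists>A' B'. convex_body A' \<and> convex_body B' \<and> homothetic A' B' \<and>
            is_vertical_stretching_of A A' \<and> is_vertical_stretching_of B B'"
proof (cases "k2 \<le> k1")
  case True
  show ?thesis by (rule construct[OF m n leA A B bA rel True])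
next
  case False
  have rel': "\<forall>x\<in>{0..n}. vA (m/n * x) = m/n * vB x + (- (m/n) * k1) \<and> uA (m/n * x) = m/n * uB x + (- (m/n) * k2)"
  proof
    fix x assume x: "x \<in> {0..n}"
    have x0: "m/n * x \<in> {0..m}" using x m n by (auto simp: divide_le_eq mult.commute mult_left_mono)
    have e: "n/m * (m/n * x) = x" using m n by simp
    have r: "vB x = n/m * vA (m/n * x) + k1" "uB x = n/m * uA (m/n * x) + k2"
      using rel x0 unfolding e by (metis e)+
    have "m/n * vB x = m/n * (n/m) * vA (m/n * x) + m/n * k1" unfolding r by (simp add: algebra_simps)
    moreover have "m/n * (n/m) = 1" using m n by simp
    moreover have "m/n * uB x = m/n * (n/m) * uA (m/n * x) + m/n * k2" unfolding r by (simp add: algebra_simps)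
    ultimately show "vA (m/n * x) = m/n * vB x + (- (m/n) * k1) \<and> uA (m/n * x) = m/n * uB x + (- (m/n) * k2)"
      by simp
  qed
  have "(m/n) * k1 \<le> (m/n) * k2" using False m n by (intro mult_left_mono) auto
  hence d: "- (m/n) * k2 \<le> - (m/n) * k1" by simp
  obtain B' A' where "convex_body B'" "convex_body A'" "homothetic B' A'"
      "is_vertical_stretching_of B B'" "is_vertical_stretching_of A A'"
    using construct[OF n m leB B A bB rel' d] by blast
  thus ?thesis using homothetic_sym by blast
qed

lemma stretch_facts:
  fixes A A' :: "(real \<times> real) set" and uA vA :: "real \<Rightarrow> real"
  assumes leA: "\<forall>x\<in>{0..m}. uA x \<le> vA x"
    and A: "A = {(x, y). 0 \<le> x \<and> x \<le> m \<and> uA x \<le> y \<and> y \<le> vA x}"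
    and bA': "convex_body A'" and h: "h \<ge> 0" and As: "A = vertical_stretching A' h"
  shows "fst ` A' = {0..m}" "\<forall>x\<in>{0..m}. uA x = lower_fun A' x \<and> vA x = upper_fun A' x + h"
proof -
  have cA': "compact A'" using bA' unfolding convex_body_def by simp
  have A1: "A = {(x, y). x \<in> {0..m} \<and> uA x \<le> y \<and> y \<le> vA x}" unfolding A by auto
  have A2: "A = {(x, y). x \<in> fst ` A' \<and> lower_fun A' x \<le> y \<and> y \<le> upper_fun A' x + h}"
    unfolding As vertical_stretching_def by simp
  have le2: "\<forall>x\<in>fst ` A'. lower_fun A' x \<le> upper_fun A' x + h"
  proof
    fix x assume "x \<in> fst ` A'"
    then obtain y where "(x, y) \<in> A'" by force
    from sec_props(3)[OF cA' this this] show "lower_fun A' x \<le> upper_fun A' x + h" using h by simp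
  qed
  have f1: "fst ` A = {0..m}" by (rule region_funs(1)[OF A1 leA])
  have f2: "fst ` A = fst ` A'" by (rule region_funs(1)[OF A2 le2])
  show fA': "fst ` A' = {0..m}" using f1 f2 by simp
  show "\<forall>x\<in>{0..m}. uA x = lower_fun A' x \<and> vA x = upper_fun A' x + h"
  proof
    fix x assume x: "x \<in> {0..m}"
    hence x': "x \<in> fst ` A'" using fA' by simp
    show "uA x = lower_fun A' x \<and> vA x = upper_fun A' x + h"
      using region_funs(2,3)[OF A1 leA x] region_funs(2,3)[OF A2 le2 x'] by simp
  qed
qed

lemma analyze:
  fixes A B A' B' :: "(real \<times> real) set" and m n :: real and uA vA uB vB :: "real \<Rightarrow> real"
  assumes m: "m > 0" and n: "n > 0"
    and leA: "\<forall>x\<in>{0..m}. uA x \<le> vA x" and leB: "\<forall>x\<in>{0..n}. uB x \<le> vB x"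
    and A: "A = {(x, y). 0 \<le> x \<and> x \<le> m \<and> uA x \<le> y \<and> y \<le> vA x}"
    and B: "B = {(x, y). 0 \<le> x \<and> x \<le> n \<and> uB x \<le> y \<and> y \<le> vB x}"
    and bA': "convex_body A'" and bB': "convex_body B'" and hom: "homothetic A' B'"
    and sA: "is_vertical_stretching_of A A'" and sB: "is_vertical_stretching_of B B'"
  shows "\<exists>k1 k2. \<forall>x\<in>{0..m}. vB (n/m * x) = n/m * vA x + k1 \<and> uB (n/m * x) = n/m * uA x + k2"
proof -
  obtain h where h: "h \<ge> 0" "A = vertical_stretching A' h" using sA unfolding is_vertical_stretching_of_def by auto
  obtain k where k: "k \<ge> 0" "B = vertical_stretching B' k" using sB unfolding is_vertical_stretching_of_def by auto
  note FA = stretch_facts[OF leA A bA' h]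
  note FB = stretch_facts[OF leB B bB' k]
  obtain c t where c: "c > 0" and B': "B' = (\<lambda>z. c *\<^sub>R z + t) ` A'" using hom unfolding homothetic_def by auto
  obtain t1 t2 where t: "t = (t1, t2)" by (cases t)
  have cA': "compact A'" using bA' unfolding convex_body_def by simp
  have fB': "fst ` B' = (\<lambda>x. c * x + t1) ` fst ` A'" unfolding B' t image_image by (simp add: case_prod_beta)
  hence img: "{0..n} = (\<lambda>x. c * x + t1) ` {0..m}" using FA(1) FB(1) by simp
  have "c * 0 + t1 \<in> {0..n}" unfolding img using m by (intro imageI) auto
  hence "t1 \<in> {0..n}" by simp
  moreover have "c * m + t1 \<in> {0..n}" unfolding img using m by (intro imageI) auto
  moreover have "(0::real) \<in> (\<lambda>x. c * x + t1) ` {0..m}" unfolding img[symmetric] using n by simp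
  then obtain x0 where "x0 \<in> {0..m}" "0 = c * x0 + t1" by auto
  moreover have "n \<in> (\<lambda>x. c * x + t1) ` {0..m}" unfolding img[symmetric] using n by simp
  then obtain x1 where "x1 \<in> {0..m}" "n = c * x1 + t1" by auto
  ultimately have t1: "t1 = 0" and cm: "c * m = n"
  proof -
    assume a: "t1 \<in> {0..n}" "c * m + t1 \<in> {0..n}" "x0 \<in> {0..m}" "0 = c * x0 + t1" "x1 \<in> {0..m}" "n = c * x1 + t1"
    have "c * x0 \<ge> 0" using a c by simp
    hence t10: "t1 = 0" using a by auto
    have "c * x1 \<le> c * m" using a c by (intro mult_left_mono) auto
    thus "t1 = 0" "c * m = n" using a t10 by auto
  qed
  have cdef: "c = n / m" using cm m by (simp add: field_simps)
  have secB: "upper_fun B' (c * x) = c * upper_fun A' x + t2 \<and> lower_fun B' (c * x) = c * lower_fun A' x + t2"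
    if x: "x \<in> {0..m}" for x
  proof -
    have "x \<in> fst ` A'" using x FA(1) by simp
    then obtain y0 where y0: "(x, y0) \<in> A'" by force
    note S = sec_props[OF cA' y0]
    have mem: "(c * x, c * upper_fun A' x + t2) \<in> B'" "(c * x, c * lower_fun A' x + t2) \<in> B'"
      using S(1,2) unfolding B' t t1 by (force intro!: image_eqI)+
    have bnd: "c * lower_fun A' x + t2 \<le> y \<and> y \<le> c * upper_fun A' x + t2" if yB: "(c * x, y) \<in> B'" for y
    proof -
      obtain x' y' where p: "(x', y') \<in> A'" "c * x = c * x' + t1" "y = c * y' + t2"
        using yB unfolding B' t by auto
      have "x' = x" using p(2) c t1 by simp
      hence "lower_fun A' x \<le> y' \<and> y' \<le> upper_fun A' x" using S(3) p(1) by simp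
      thus ?thesis using p(3) c by (simp add: mult_left_mono)
    qed
    have "upper_fun B' (c * x) = c * upper_fun A' x + t2"
      unfolding upper_fun_def[of B'] by (rule cSup_eq_maximum) (use mem bnd in auto)
    moreover have "lower_fun B' (c * x) = c * lower_fun A' x + t2"
      unfolding lower_fun_def[of B'] by (rule cInf_eq_minimum) (use mem bnd in auto)
    ultimately show ?thesis by simp
  qed
  show ?thesis
  proof (rule exI[of _ "t2 + k - c * h"], rule exI[of _ t2], rule ballI)
    fix x assume x: "x \<in> {0..m}"
    have cx: "c * x \<in> {0..n}" using x c cm by (auto intro: mult_left_mono)
    have "vB (c * x) = upper_fun B' (c * x) + k" "uB (c * x) = lower_fun B' (c * x)" using FB(2) cx by auto
    moreover have "vA x = upper_fun A' x + h" "uA x = lower_fun A' x" using FA(2) x by auto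
    ultimately show "vB (n/m * x) = n/m * vA x + (t2 + k - c * h) \<and> uB (n/m * x) = n/m * uA x + t2"
      using secB[OF x] unfolding cdef[symmetric] by (simp add: algebra_simps)
  qed
qed



locale twob =
  fixes A B :: "(real \<times> real) set" and m n :: real
    and uA vA uB vB :: "real \<Rightarrow> real"
  assumes m: "m > 0" and n: "n > 0"
    and cuA: "convex_on {0..m} uA" and cvA: "concave_on {0..m} vA" and leA: "\<forall>x\<in>{0..m}. uA x \<le> vA x"
    and cuB: "convex_on {0..n} uB" and cvB: "concave_on {0..n} vB" and leB: "\<forall>x\<in>{0..n}. uB x \<le> vB x"
    and A: "A = {(x, y). 0 \<le> x \<and> x \<le> m \<and> uA x \<le> y \<and> y \<le> vA x}"
    and B: "B = {(x, y). 0 \<le> x \<and> x \<le> n \<and> uB x \<le> y \<and> y \<le> vB x}"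
    and bA: "convex_body A" and bB: "convex_body B"
begin

lemma compA: "compact A" and compB: "compact B"
  using bA bB unfolding convex_body_def by auto

lemma contA: "continuous_on {0..m} vA" "continuous_on {0..m} uA"
proof -
  show "continuous_on {0..m} vA"
    by (rule concave_cont[OF compA cvA]) (use leA in \<open>auto simp: A\<close>)
  show "continuous_on {0..m} uA"
    by (rule convex_cont[OF compA cuA]) (use leA in \<open>auto simp: A\<close>)
qed

lemma contB: "continuous_on {0..n} vB" "continuous_on {0..n} uB"
proof -
  show "continuous_on {0..n} vB"
    by (rule concave_cont[OF compB cvB]) (use leB in \<open>auto simp: B\<close>)
  show "continuous_on {0..n} uB"
    by (rule convex_cont[OF compB cuB]) (use leB in \<open>auto simp: B\<close>)
qed

lemma area_closed: "closed X \<Longrightarrow> area X = measure lborel X"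
  unfolding area_def by (simp add: borel_closed)

lemma areaA: "area A = integral {0..m} (\<lambda>x. vA x - uA x)"
proof -
  have "area A = measure lborel A" using compA by (simp add: area_closed compact_imp_closed)
  also have "\<dots> = integral {0..m} (\<lambda>x. vA x - uA x)"
    unfolding A by (rule region_measure) (use m contA leA in auto)
  finally show ?thesis .
qed

lemma areaB: "area B = integral {0..n} (\<lambda>x. vB x - uB x)"
proof -
  have "area B = measure lborel B" using compB by (simp add: area_closed compact_imp_closed)
  also have "\<dots> = integral {0..n} (\<lambda>x. vB x - uB x)"
    unfolding B by (rule region_measure) (use n contB leB in auto)
  finally show ?thesis .
qed

definition "mu = m / (m + n)"
definition "nu = n / (m + n)"
definition "L z = uA (mu * z) + uB (nu * z)"
definition "U z = vA (mu * z) + vB (nu * z)"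
definition "D = {(z, w). 0 \<le> z \<and> z \<le> m + n \<and> L z \<le> w \<and> w \<le> U z}"
definition "C = minkowski_sum A B"

lemma mnpos: "m + n > 0" using m n by simp

lemma mu: "mu > 0" "mu * (m + n) = m" and nu: "nu > 0" "nu * (m + n) = n" and munu: "mu + nu = 1"
proof -
  have ne: "m + n \<noteq> 0" using mnpos by simp
  show "mu > 0" "nu > 0" unfolding mu_def nu_def using m n mnpos by auto
  show "mu * (m + n) = m" "nu * (m + n) = n" unfolding mu_def nu_def using ne by auto
  show "mu + nu = 1" unfolding mu_def nu_def using ne by (simp add: add_divide_distrib[symmetric])
qed

lemma muz: "z \<in> {0..m+n} \<Longrightarrow> mu * z \<in> {0..m}"
proof -
  assume z: "z \<in> {0..m+n}"
  have "mu * z \<le> mu * (m + n)" using z mu by (intro mult_left_mono) auto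
  thus ?thesis using z mu by auto
qed
lemma nuz: "z \<in> {0..m+n} \<Longrightarrow> nu * z \<in> {0..n}"
proof -
  assume z: "z \<in> {0..m+n}"
  have "nu * z \<le> nu * (m + n)" using z nu by (intro mult_left_mono) auto
  thus ?thesis using z nu by auto
qed

lemma comp_cont:
  fixes f :: "real \<Rightarrow> real" and k a b :: real
  assumes "continuous_on {0..a} f" "k > 0" "k * b = a"
  shows "continuous_on {0..b} (\<lambda>z. f (k * z))"
proof -
  have c: "continuous_on {0..b} (\<lambda>z. k * z)"
    using continuous_on_mult_left[OF continuous_on_id, of "{0..b}" k] by (simp add: id_def)
  have "(\<lambda>z. k * z) ` {0..b} \<subseteq> {0..a}"
  proof
    fix y assume "y \<in> (\<lambda>z. k * z) ` {0..b}"
    then obtain z where z: "z \<in> {0..b}" "y = k * z" by auto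
    have "k * z \<le> k * b" using z assms(2) by (intro mult_left_mono) auto
    thus "y \<in> {0..a}" using z assms by auto
  qed
  from continuous_on_compose2[OF assms(1) c this] show ?thesis .
qed

lemma cc: "continuous_on {0..m+n} (\<lambda>z. uA (mu * z))" "continuous_on {0..m+n} (\<lambda>z. vA (mu * z))"
  "continuous_on {0..m+n} (\<lambda>z. uB (nu * z))" "continuous_on {0..m+n} (\<lambda>z. vB (nu * z))"
  by (rule comp_cont[OF contA(2) mu(1,2)], rule comp_cont[OF contA(1) mu(1,2)],
      rule comp_cont[OF contB(2) nu(1,2)], rule comp_cont[OF contB(1) nu(1,2)])

lemma contLU: "continuous_on {0..m+n} L" "continuous_on {0..m+n} U"
  unfolding L_def[abs_def] U_def[abs_def]
  by (intro continuous_on_add cc)+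

lemma LU: "\<forall>z\<in>{0..m+n}. L z \<le> U z"
  unfolding L_def U_def using leA leB muz nuz by (simp add: add_mono)

lemma closedD: "closed D"
  unfolding D_def by (rule region_closed) (use m n contLU in auto)

lemma stretch_int:
  fixes f :: "real \<Rightarrow> real" and k a b :: real
  assumes f: "continuous_on {0..a} f" and k: "k > 0" and kb: "k * b = a"
  shows "integral {0..b} (\<lambda>z. f (k * z)) = integral {0..a} f / k"
proof -
  have "(\<lambda>x. x / k) ` {0..a} = {0..b}"
  proof
    show "(\<lambda>x. x / k) ` {0..a} \<subseteq> {0..b}"
    proof
      fix y assume "y \<in> (\<lambda>x. x / k) ` {0..a}"
      then obtain x where x: "x \<in> {0..a}" "y = x / k" by auto
      have "x \<le> k * b" using x kb by simp
      hence "x \<le> b * k" by (simp add: mult.commute)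
      hence "x / k \<le> b" using k by (simp add: pos_divide_le_eq)
      moreover have "0 \<le> x / k" using x k by simp
      ultimately show "y \<in> {0..b}" using x by simp
    qed
    show "{0..b} \<subseteq> (\<lambda>x. x / k) ` {0..a}"
    proof
      fix z assume z: "z \<in> {0..b}"
      have "k * z \<le> k * b" using z k by (intro mult_left_mono) auto
      hence "k * z \<in> {0..a}" using z k kb by auto
      moreover have "z = (k * z) / k" using k by simp
      ultimately show "z \<in> (\<lambda>x. x / k) ` {0..a}" by blast
    qed
  qed
  with integral_stretch_real[of k 0 a f] k show ?thesis by simp
qed

lemma areaD: "measure lborel D = (area A / m + area B / n) * (m + n)"
proof -
  have "measure lborel D = integral {0..m+n} (\<lambda>z. U z - L z)"
    unfolding D_def by (rule region_measure) (use m n contLU LU in auto)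
  also have "(\<lambda>z. U z - L z) = (\<lambda>z. (\<lambda>x. vA x - uA x) (mu * z) + (\<lambda>x. vB x - uB x) (nu * z))"
    unfolding U_def L_def by (auto simp: algebra_simps)
  also have "integral {0..m+n} \<dots> = integral {0..m+n} (\<lambda>z. (\<lambda>x. vA x - uA x) (mu * z)) + integral {0..m+n} (\<lambda>z. (\<lambda>x. vB x - uB x) (nu * z))"
    by (intro integral_add integrable_continuous_interval continuous_on_diff cc)
  also have "\<dots> = integral {0..m} (\<lambda>x. vA x - uA x) / mu + integral {0..n} (\<lambda>x. vB x - uB x) / nu"
    by (simp add: stretch_int[OF continuous_on_diff[OF contA] mu] stretch_int[OF continuous_on_diff[OF contB] nu])
  also have "\<dots> = (area A / m + area B / n) * (m + n)"
    unfolding areaA areaB mu_def nu_def using m n by (simp add: field_simps)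
  finally show ?thesis .
qed

end



lemma rel_from_cond:
  fixes f g :: "real \<Rightarrow> real" and m n :: real
  assumes m: "m > 0" and n: "n > 0" and cf: "concave_on {0..m} f" and cg: "concave_on {0..n} g"
    and kf: "continuous_on {0..m} f" and kg: "continuous_on {0..n} g"
    and cond: "\<forall>x\<in>{0..m}. \<forall>y\<in>{0..n}. f x + g y \<le> f (m/(m+n) * (x+y)) + g (n/(m+n) * (x+y))"
  shows "\<exists>k. \<forall>x\<in>{0..m}. g (n/m * x) = n/m * f x + k"
proof -
  define P where "P s = f (m * s) / m" for s
  define Q where "Q s = g (n * s) / n" for s
  define mu where "mu = m / (m + n)"
  define nu where "nu = n / (m + n)"
  have mn: "m + n > 0" using m n by simp
  have mu: "mu > 0" and nu: "nu > 0" unfolding mu_def nu_def using m n mn by auto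
  have munu: "mu + nu = 1" unfolding mu_def nu_def using mn by (simp add: add_divide_distrib[symmetric])
  have cP: "concave_on {0..1} P" unfolding P_def[abs_def] by (rule concave_scale[OF cf m])
  have cQ: "concave_on {0..1} Q" unfolding Q_def[abs_def] by (rule concave_scale[OF cg n])
  have kP: "continuous_on {0..1} P" unfolding P_def[abs_def] by (rule cont_scale[OF kf m])
  have kQ: "continuous_on {0..1} Q" unfolding Q_def[abs_def] by (rule cont_scale[OF kg n])
  have cond': "\<forall>a1\<in>{0..1}. \<forall>a2\<in>{0..1}. mu * P a1 + nu * Q a2 \<le> mu * P (mu * a1 + nu * a2) + nu * Q (mu * a1 + nu * a2)"
  proof (intro ballI)
    fix a1 a2 :: real assume a1: "a1 \<in> {0..1}" and a2: "a2 \<in> {0..1}"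
    define x where "x = m * a1"
    define y where "y = n * a2"
    have x: "x \<in> {0..m}" unfolding x_def using a1 m by (auto simp: mult_le_cancel_left1)
    have y: "y \<in> {0..n}" unfolding y_def using a2 n by (auto simp: mult_le_cancel_left1)
    have c: "f x + g y \<le> f (m/(m+n) * (x+y)) + g (n/(m+n) * (x+y))" using cond x y by blast
    have e1: "m * (mu * a1 + nu * a2) = m/(m+n) * (x+y)"
      unfolding mu_def nu_def x_def y_def using mn by (simp add: divide_simps)
    have e2: "n * (mu * a1 + nu * a2) = n/(m+n) * (x+y)"
      unfolding mu_def nu_def x_def y_def using mn by (simp add: divide_simps)
    have e3: "mu * (v / m) = v / (m + n)" "nu * (v / n) = v / (m + n)" for v
      unfolding mu_def nu_def using m n mn by (simp_all add: field_simps)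
    have "mu * P a1 + nu * Q a2 = (f x + g y) / (m + n)"
      unfolding P_def Q_def x_def[symmetric] y_def[symmetric] e3 by (simp add: add_divide_distrib)
    also have "\<dots> \<le> (f (m/(m+n) * (x+y)) + g (n/(m+n) * (x+y))) / (m + n)"
      using c mn by (simp add: divide_right_mono)
    also have "\<dots> = mu * P (mu * a1 + nu * a2) + nu * Q (mu * a1 + nu * a2)"
      unfolding P_def Q_def e1 e2 e3 by (simp add: add_divide_distrib)
    finally show "mu * P a1 + nu * Q a2 \<le> mu * P (mu * a1 + nu * a2) + nu * Q (mu * a1 + nu * a2)" .
  qed
  have cd: "\<forall>s\<in>{0..1}. Q s - P s = Q 1 - P 1" by (rule const_diff[OF cP cQ mu nu munu cond' kP kQ])
  show ?thesis
  proof (rule exI[of _ "n * (Q 1 - P 1)"], rule ballI)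
    fix x assume x: "x \<in> {0..m}"
    have s: "x / m \<in> {0..1}" using x m by auto
    have "Q (x/m) - P (x/m) = Q 1 - P 1" using cd s by blast
    moreover have "m * (x / m) = x" using m by simp
    moreover have "n * (x / m) = n/m * x" by simp
    ultimately have "g (n/m * x) / n - f x / m = Q 1 - P 1" unfolding P_def Q_def by simp
    hence "g (n/m * x) = n * (f x / m + (Q 1 - P 1))" using n by (simp add: field_simps)
    thus "g (n/m * x) = n/m * f x + n * (Q 1 - P 1)" by (simp add: algebra_simps)
  qed
qed



lemma convD:
  fixes u :: "real \<Rightarrow> real"
  assumes "convex_on {a..b} u" "x \<in> {a..b}" "y \<in> {a..b}" "0 \<le> t" "t \<le> 1"
  shows "u ((1-t)*x + t*y) \<le> (1-t) * u x + t * u y"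
  using convex_onD[OF assms(1) assms(4,5,2,3)] by simp

context twob
begin

lemma D_sub_C: "D \<subseteq> C"
proof
  fix p assume "p \<in> D"
  then obtain z w where p: "p = (z, w)" and z: "z \<in> {0..m+n}" and w: "L z \<le> w" "w \<le> U z"
    unfolding D_def by auto
  define x where "x = mu * z"
  define y where "y = nu * z"
  have x: "x \<in> {0..m}" unfolding x_def by (rule muz[OF z])
  have y: "y \<in> {0..n}" unfolding y_def by (rule nuz[OF z])
  have xy: "x + y = z" unfolding x_def y_def using munu by (simp add: distrib_right[symmetric])
  define wa where "wa = min (vA x) (w - uB y)"
  define wb where "wb = w - wa"
  have l1: "uA x \<le> vA x" "uB y \<le> vB y" using leA leB x y by auto
  have w': "uA x + uB y \<le> w" "w \<le> vA x + vB y" using w unfolding L_def U_def x_def[symmetric] y_def[symmetric] by auto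
  have "uA x \<le> wa" "wa \<le> vA x" "uB y \<le> wb" "wb \<le> vB y"
    using w' l1 unfolding wa_def wb_def by (auto simp: min_def)
  hence "(x, wa) \<in> A" "(y, wb) \<in> B" using x y unfolding A B by auto
  moreover have "p = (x, wa) + (y, wb)" unfolding p wb_def using xy by simp
  ultimately show "p \<in> C" unfolding C_def minkowski_sum_def by blast
qed

lemma C_compact: "compact C"
  unfolding C_def minkowski_sum_def by (rule compact_sums[OF compA compB])

lemma C_convex: "convex C"
proof -
  have "C = (\<Union>x\<in>A. \<Union>y\<in>B. {x + y})" unfolding C_def minkowski_sum_def by blast
  moreover have "convex A" "convex B" using bA bB unfolding convex_body_def by auto
  ultimately show ?thesis using convex_sums by simp
qed

lemma C_interior: "interior C \<noteq> {}"
proof -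
  obtain a where "a \<in> interior A" using bA unfolding convex_body_def by auto
  then obtain r where r: "r > 0" "ball a r \<subseteq> A" unfolding mem_interior by auto
  obtain b where b: "b \<in> interior B" using bB unfolding convex_body_def by auto
  hence bB': "b \<in> B" using interior_subset by auto
  have "ball (a + b) r \<subseteq> C"
  proof
    fix q assume "q \<in> ball (a + b) r"
    hence "q - b \<in> ball a r" by (simp add: dist_norm algebra_simps)
    hence "q - b \<in> A" using r by auto
    moreover have "q = (q - b) + b" by simp
    ultimately show "q \<in> C" unfolding C_def minkowski_sum_def using bB' by blast
  qed
  hence "a + b \<in> interior C" using r unfolding mem_interior by blast
  thus ?thesis by auto
qed

lemma eq_imp_sub:
  assumes eq: "area C = (area A / m + area B / n) * (m + n)"
  shows "C \<subseteq> D"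
proof (rule ccontr)
  assume "\<not> C \<subseteq> D"
  then obtain p where p: "p \<in> C" "p \<notin> D" by auto
  have cC: "closed C" using C_compact by (rule compact_imp_closed)
  have mC: "measure lborel C = measure lborel D" using eq areaD area_closed[OF cC] by simp
  have fC: "C \<in> fmeasurable lborel" using C_compact by (rule fmeasurable_compact)
  have sD: "D \<in> sets lborel" using closedD by (simp add: borel_closed)
  have m0: "measure lborel (C - D) = 0"
    using measurable_measure_Diff[OF fC sD D_sub_C] mC by simp
  have "closure (interior C) = closure C" by (rule convex_closure_interior[OF C_convex C_interior])
  hence "p \<in> closure (interior C)" using p cC by (simp add: closure_closed)
  moreover have oD: "open (- D)" using closedD by (rule open_Compl)
  moreover have "p \<in> - D" using p by simp
  ultimately have "- D \<inter> interior C \<noteq> {}"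
    using open_Int_closure_eq_empty[OF oD, of "interior C"] by blast
  then obtain q where q: "q \<in> - D \<inter> interior C" by auto
  have "open (- D \<inter> interior C)" using oD by (intro open_Int) auto
  then obtain r where r: "r > 0" "ball q r \<subseteq> - D \<inter> interior C"
    using q unfolding open_contains_ball by blast
  hence sub: "ball q r \<subseteq> C - D" using interior_subset by blast
  have "C - D \<in> fmeasurable lborel" using fC sD by (intro fmeasurable_Diff) auto
  hence "measure lborel (ball q r) \<le> measure lborel (C - D)"
    using sub by (intro measure_mono_fmeasurable) auto
  moreover have "measure lborel (ball q r) > 0" using content_ball_pos[OF r(1)] .
  ultimately show False using m0 by simp
qed

lemma sub_imp_rel:
  assumes sub: "C \<subseteq> D"
  shows "\<exists>k1 k2. \<forall>x\<in>{0..m}. vB (n/m * x) = n/m * vA x + k1 \<and> uB (n/m * x) = n/m * uA x + k2"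
proof -
  have cnd: "vA x + vB y \<le> vA (m/(m+n) * (x+y)) + vB (n/(m+n) * (x+y)) \<and>
             uA (m/(m+n) * (x+y)) + uB (n/(m+n) * (x+y)) \<le> uA x + uB y"
    if x: "x \<in> {0..m}" and y: "y \<in> {0..n}" for x y
  proof -
    have "(x, vA x) \<in> A" "(x, uA x) \<in> A" using x leA unfolding A by auto
    moreover have "(y, vB y) \<in> B" "(y, uB y) \<in> B" using y leB unfolding B by auto
    ultimately have "(x, vA x) + (y, vB y) \<in> C" "(x, uA x) + (y, uB y) \<in> C"
      unfolding C_def minkowski_sum_def by blast+
    hence "(x + y, vA x + vB y) \<in> D" "(x + y, uA x + uB y) \<in> D" using sub by auto
    thus ?thesis unfolding D_def L_def U_def mu_def nu_def by auto
  qed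
  have kv: "\<exists>k. \<forall>x\<in>{0..m}. vB (n/m * x) = n/m * vA x + k"
    by (rule rel_from_cond[OF m n cvA cvB contA(1) contB(1)]) (use cnd in blast)
  have ku: "\<exists>k. \<forall>x\<in>{0..m}. - uB (n/m * x) = n/m * (- uA x) + k"
  proof (rule rel_from_cond[OF m n])
    show "concave_on {0..m} (\<lambda>x. - uA x)" using cuA by (simp add: convex_on_iff_concave)
    show "concave_on {0..n} (\<lambda>x. - uB x)" using cuB by (simp add: convex_on_iff_concave)
    show "continuous_on {0..m} (\<lambda>x. - uA x)" using contA(2) by (rule continuous_on_minus)
    show "continuous_on {0..n} (\<lambda>x. - uB x)" using contB(2) by (rule continuous_on_minus)
    show "\<forall>x\<in>{0..m}. \<forall>y\<in>{0..n}. - uA x + - uB y \<le> - uA (m / (m + n) * (x + y)) + - uB (n / (m + n) * (x + y))"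
      using cnd by force
  qed
  obtain k1 where k1: "\<forall>x\<in>{0..m}. vB (n/m * x) = n/m * vA x + k1" using kv by blast
  obtain k where k: "\<forall>x\<in>{0..m}. - uB (n/m * x) = n/m * (- uA x) + k" using ku by blast
  have "\<forall>x\<in>{0..m}. vB (n/m * x) = n/m * vA x + k1 \<and> uB (n/m * x) = n/m * uA x + (- k)"
    using k1 k by (auto simp: algebra_simps)
  thus ?thesis by blast
qed

end



context twob
begin

lemma rel_imp_sub:
  assumes rel: "\<forall>x\<in>{0..m}. vB (n/m * x) = n/m * vA x + k1 \<and> uB (n/m * x) = n/m * uA x + k2"
  shows "C \<subseteq> D"
proof
  fix p assume "p \<in> C"
  then obtain a b where ab: "p = a + b" "a \<in> A" "b \<in> B" unfolding C_def minkowski_sum_def by blast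
  obtain x ya where a: "a = (x, ya)" by (cases a)
  obtain y yb where b: "b = (y, yb)" by (cases b)
  have x: "x \<in> {0..m}" "uA x \<le> ya" "ya \<le> vA x" using ab(2) unfolding a A by auto
  have y: "y \<in> {0..n}" "uB y \<le> yb" "yb \<le> vB y" using ab(3) unfolding b B by auto
  define z where "z = x + y"
  have z: "z \<in> {0..m+n}" unfolding z_def using x y by auto
  define y' where "y' = m/n * y"
  have y'm: "y' \<in> {0..m}"
  proof -
    have "m/n * y \<le> m/n * n" using y m n by (intro mult_left_mono) auto
    thus ?thesis unfolding y'_def using y m n by auto
  qed
  have yy': "n/m * y' = y" unfolding y'_def using m n by simp
  have r0: "vB (n/m * y') = n/m * vA y' + k1 \<and> uB (n/m * y') = n/m * uA y' + k2" using rel y'm by blast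
  have relv: "vB y = n/m * vA y' + k1" and relu: "uB y = n/m * uA y' + k2" using r0 unfolding yy' by auto
  have muz': "mu * z \<in> {0..m}" by (rule muz[OF z])
  have nz: "n/m * (mu * z) = nu * z" unfolding mu_def nu_def using m n by simp
  have Uz: "U z = vA (mu * z) + (n/m * vA (mu * z) + k1)" unfolding U_def using rel muz' nz by metis
  have Lz: "L z = uA (mu * z) + (n/m * uA (mu * z) + k2)" unfolding L_def using rel muz' nz by metis
  have comb: "(1 - nu) * x + nu * y' = mu * z"
  proof -
    have e1: "1 - nu = mu" using munu by simp
    have e2: "nu * y' = mu * y" unfolding y'_def mu_def nu_def using m n by simp
    have "(1 - nu) * x + nu * y' = mu * x + mu * y" unfolding e1 e2 ..
    thus ?thesis unfolding z_def by (simp add: distrib_left)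
  qed
  have nu1: "0 \<le> nu" "nu \<le> 1" using nu munu mu by auto
  have cv: "vA (mu * z) \<ge> (1 - nu) * vA x + nu * vA y'"
    using concD[OF cvA x(1) y'm nu1] unfolding comb .
  have cu: "uA (mu * z) \<le> (1 - nu) * uA x + nu * uA y'"
    using convD[OF cuA x(1) y'm nu1] unfolding comb .
  have q1: "1 + n/m = (m+n)/m" using m by (simp add: field_simps)
  have q2: "1 - nu = m/(m+n)" using munu unfolding mu_def by simp
  have ne: "m + n \<noteq> 0" "m \<noteq> 0" using mnpos m by auto
  have f1: "(1 + n/m) * (1 - nu) = 1" unfolding q1 q2 using ne by simp
  have f2: "(1 + n/m) * nu = n/m" unfolding q1 nu_def using ne by simp
  have pos: "1 + n/m > 0" using m n by (simp add: add_pos_nonneg)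
  have E: "(1 + n/m) * ((1 - nu) * a' + nu * b') = a' + n/m * b'" for a' b'
  proof -
    have "(1 + n/m) * ((1 - nu) * a' + nu * b') = ((1 + n/m) * (1 - nu)) * a' + ((1 + n/m) * nu) * b'"
      by (simp add: algebra_simps)
    thus ?thesis unfolding f1 f2 by simp
  qed
  have U2: "U z = (1 + n/m) * vA (mu * z) + k1" unfolding Uz by (simp add: algebra_simps)
  have L2: "L z = (1 + n/m) * uA (mu * z) + k2" unfolding Lz by (simp add: algebra_simps)
  have "(1 + n/m) * ((1 - nu) * vA x + nu * vA y') \<le> (1 + n/m) * vA (mu * z)"
    using cv pos by (intro mult_left_mono) auto
  hence "vA x + n/m * vA y' \<le> (1 + n/m) * vA (mu * z)" unfolding E .
  hence up: "ya + yb \<le> U z" unfolding U2 using x y relv by linarith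
  have "(1 + n/m) * uA (mu * z) \<le> (1 + n/m) * ((1 - nu) * uA x + nu * uA y')"
    using cu pos by (intro mult_left_mono) auto
  hence "(1 + n/m) * uA (mu * z) \<le> uA x + n/m * uA y'" unfolding E .
  hence lo: "L z \<le> ya + yb" unfolding L2 using x y relu by linarith
  have "p = (z, ya + yb)" unfolding ab(1) a b z_def by simp
  thus "p \<in> D" unfolding D_def using z up lo by auto
qed

theorem main:
  "area (minkowski_sum A B) = (area A / m + area B / n) * (m + n)
     \<longleftrightarrow> (\<exists>A' B'. convex_body A' \<and> convex_body B' \<and> homothetic A' B' \<and>
            is_vertical_stretching_of A A' \<and> is_vertical_stretching_of B B')"
proof
  assume "area (minkowski_sum A B) = (area A / m + area B / n) * (m + n)"
  hence "C \<subseteq> D" unfolding C_def[symmetric] by (rule eq_imp_sub)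
  then obtain k1 k2 where rel: "\<forall>x\<in>{0..m}. vB (n/m * x) = n/m * vA x + k1 \<and> uB (n/m * x) = n/m * uA x + k2"
    using sub_imp_rel by blast
  show "\<exists>A' B'. convex_body A' \<and> convex_body B' \<and> homothetic A' B' \<and>
            is_vertical_stretching_of A A' \<and> is_vertical_stretching_of B B'"
    by (rule construct_full[OF m n leA leB A B bA bB rel])
next
  assume "\<exists>A' B'. convex_body A' \<and> convex_body B' \<and> homothetic A' B' \<and>
            is_vertical_stretching_of A A' \<and> is_vertical_stretching_of B B'"
  then obtain A' B' where h: "convex_body A'" "convex_body B'" "homothetic A' B'"
      "is_vertical_stretching_of A A'" "is_vertical_stretching_of B B'" by blast
  obtain k1 k2 where rel: "\<forall>x\<in>{0..m}. vB (n/m * x) = n/m * vA x + k1 \<and> uB (n/m * x) = n/m * uA x + k2"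
    using analyze[OF m n leA leB A B h] by blast
  have "C = D" using rel_imp_sub[OF rel] D_sub_C by blast
  hence "area C = measure lborel D" using area_closed[OF closedD] by simp
  thus "area (minkowski_sum A B) = (area A / m + area B / n) * (m + n)"
    unfolding C_def areaD .
qed

end


theorem theorem4p2:
  fixes A B :: "(real \<times> real) set" and m n :: real
    and uA vA uB vB :: "real \<Rightarrow> real"
  assumes "m > 0" and "n > 0"
    and "convex_on {0..m} uA" and "concave_on {0..m} vA" and "\<forall>x\<in>{0..m}. uA x \<le> vA x"
    and "convex_on {0..n} uB" and "concave_on {0..n} vB" and "\<forall>x\<in>{0..n}. uB x \<le> vB x"
    and "A = {(x, y). 0 \<le> x \<and> x \<le> m \<and> uA x \<le> y \<and> y \<le> vA x}"
    and "B = {(x, y). 0 \<le> x \<and> x \<le> n \<and> uB x \<le> y \<and> y \<le> vB x}"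
    and "convex_body A" and "convex_body B"
  shows "area (minkowski_sum A B) = (area A / m + area B / n) * (m + n)
     \<longleftrightarrow> (\<exists>A' B'. convex_body A' \<and> convex_body B' \<and> homothetic A' B' \<and>
            is_vertical_stretching_of A A' \<and> is_vertical_stretching_of B B')"
  using twob.main[OF twob.intro[OF assms]] .

end
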